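(* For any integer $c \ge 1$, let $s = 15(c+2)+1$ and $C = 4^4/(5e)^5$, where $e$ is Euler's number. There exists a randomized algorithm which, given any $n$ elements, outputs a $3$-max of the set with probability at least $1-n^{-c}$ using at most $(s-1)n + \frac{1}{2}\left(\frac{c+1}{C\ln 2}\right)^2 n^{2/3}\ln^4 n = O(n)$ comparisons. This holds even if the comparator chooses its answers on close pairs adversarially and adaptively (depending on the algorithm's previous queries).
   Context: Model of imprecise comparisons: there are $n$ elements, each with a fixed unknown real value (the values do not change during the execution); we identify an element with its value. Asked to compare $x_i$ and $x_j$, the comparator answers either "$x_i \ge x_j$" or "$x_j \ge x_i$". If $|x_i-x_j|>1$ the answer is correct; if $|x_i-x_j|\le 1$ the answer is arbitrary. An element $x$ is $k$-greater than $y$ if $x \ge y-k$; a $k$-max of a set is an element $k$-greater than all other elements of the set. *)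

theory Defs
  imports "HOL-Probability.Probability_Mass_Function"
begin

text \<open>Deterministic comparison algorithm on elements indexed 0..<n: a decision tree.
  Query i j g asks the comparator about the pair (i,j); the answer True means
  "x_i \<ge> x_j" and False means "x_j \<ge> x_i"; then continue with g answer.\<close>
datatype dtree = Leaf nat | Query nat nat "bool \<Rightarrow> dtree"

type_synonym history = "(nat \<times> nat \<times> bool) list"

text \<open>An adaptive adversarial comparator: its answer may depend on the whole
  history of previous queries (and answers) and on the current query.\<close>
type_synonym comparator = "history \<Rightarrow> nat \<Rightarrow> nat \<Rightarrow> bool"

definition valid_comparator :: "(nat \<Rightarrow> real) \<Rightarrow> comparator \<Rightarrow> bool" where
  "valid_comparator x cmp \<longleftrightarrow>
     (\<forall>h i j. \<bar>x i - x j\<bar> > 1 \<longrightarrow> (cmp h i j \<longleftrightarrow> x i \<ge> x j))"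

primrec run :: "comparator \<Rightarrow> history \<Rightarrow> dtree \<Rightarrow> nat \<times> history" where
  "run cmp h (Leaf k) = (k, h)"
| "run cmp h (Query i j g) = run cmp (h @ [(i, j, cmp h i j)]) (g (cmp h i j))"

primrec height :: "dtree \<Rightarrow> nat" where
  "height (Leaf k) = 0"
| "height (Query i j g) = Suc (max (height (g True)) (height (g False)))"

primrec wf_tree :: "nat \<Rightarrow> dtree \<Rightarrow> bool" where
  "wf_tree n (Leaf k) \<longleftrightarrow> k < n"
| "wf_tree n (Query i j g) \<longleftrightarrow> i < n \<and> j < n \<and> wf_tree n (g True) \<and> wf_tree n (g False)"

definition k_greater :: "real \<Rightarrow> real \<Rightarrow> real \<Rightarrow> bool" where
  "k_greater k a b \<longleftrightarrow> a \<ge> b - k"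

definition is_kmax :: "real \<Rightarrow> nat \<Rightarrow> (nat \<Rightarrow> real) \<Rightarrow> nat \<Rightarrow> bool" where
  "is_kmax k n x m \<longleftrightarrow> m < n \<and> (\<forall>j<n. j \<noteq> m \<longrightarrow> k_greater k (x m) (x j))"

end

theory Submission
  imports Defs "HOL-Probability.Product_PMF"
begin

lemma emeasure_bind_le:
  assumes "\<And>x. x \<in> set_pmf M \<Longrightarrow> emeasure (measure_pmf (N x)) X \<le> g x"
  shows "emeasure (measure_pmf (bind_pmf M N)) X \<le> (\<integral>\<^sup>+x. g x \<partial>measure_pmf M)"
  unfolding emeasure_bind_pmf
  by (rule nn_integral_mono_AE) (use assms in \<open>auto simp: AE_measure_pmf_iff\<close>)

lemma prob_bind_le:
  assumes "\<And>x. x \<in> set_pmf M \<Longrightarrow> x \<notin> A \<Longrightarrow> measure_pmf.prob (N x) X \<le> b" "0 \<le> b"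
  shows "measure_pmf.prob (bind_pmf M N) X \<le> measure_pmf.prob M A + b"
proof -
  have "emeasure (measure_pmf (bind_pmf M N)) X \<le> (\<integral>\<^sup>+x. (indicator A x + ennreal b) \<partial>measure_pmf M)"
  proof (rule emeasure_bind_le)
    fix x assume x: "x \<in> set_pmf M"
    show "emeasure (measure_pmf (N x)) X \<le> indicator A x + ennreal b"
    proof (cases "x \<in> A")
      case True
      then show ?thesis using measure_pmf.emeasure_le_1[of "N x" X]
        by (simp add: add_increasing2)
    next
      case False
      then show ?thesis using assms(1)[OF x False] 
        by (simp add: measure_pmf.emeasure_eq_measure ennreal_leI)
    qed
  qed
  also have "\<dots> = emeasure (measure_pmf M) A + ennreal b"
    by (subst nn_integral_add) (auto simp: measure_pmf.prob_space)
  finally show ?thesis using assms(2)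
    by (simp add: measure_pmf.emeasure_eq_measure ennreal_plus[symmetric] del: ennreal_plus)
qed

datatype 'a rt = Ret 'a | Qry nat nat "bool \<Rightarrow> 'a rt" | Rnd nat "nat \<Rightarrow> 'a rt"

primrec rbind :: "'a rt \<Rightarrow> ('a \<Rightarrow> 'b rt) \<Rightarrow> 'b rt" where
  "rbind (Ret a) f = f a"
| "rbind (Qry i j g) f = Qry i j (\<lambda>b. rbind (g b) f)"
| "rbind (Rnd N g) f = Rnd N (\<lambda>u. rbind (g u) f)"

definition upmf :: "nat \<Rightarrow> nat pmf" where "upmf N = pmf_of_set {..<max 1 N}"

lemma set_upmf[simp]: "set_pmf (upmf N) = {..<max 1 N}"
  unfolding upmf_def by (rule set_pmf_of_set) (auto simp: set_eq_iff intro: exI[of _ 0])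

primrec rexec :: "comparator \<Rightarrow> 'a rt \<Rightarrow> history \<Rightarrow> ('a \<times> history) pmf" where
  "rexec cmp (Ret a) h = return_pmf (a, h)"
| "rexec cmp (Qry i j g) h = rexec cmp (g (cmp h i j)) (h @ [(i, j, cmp h i j)])"
| "rexec cmp (Rnd N g) h = bind_pmf (upmf N) (\<lambda>u. rexec cmp (g u) h)"

primrec to_pmf :: "nat rt \<Rightarrow> dtree pmf" where
  "to_pmf (Ret k) = return_pmf (Leaf k)"
| "to_pmf (Qry i j g) = bind_pmf (to_pmf (g True)) (\<lambda>a. bind_pmf (to_pmf (g False))
      (\<lambda>b. return_pmf (Query i j (\<lambda>x. if x then a else b))))"
| "to_pmf (Rnd N g) = bind_pmf (upmf N) (\<lambda>u. to_pmf (g u))"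

lemma run_to_pmf: "map_pmf (run cmp h) (to_pmf t) = rexec cmp t h"
proof (induction t arbitrary: h)
  case (Ret x)
  then show ?case by simp
next
  case (Qry i j g)
  show ?case
  proof (cases "cmp h i j")
    case True
    have "map_pmf (run cmp h) (to_pmf (Qry i j g)) = map_pmf (run cmp (h @ [(i, j, True)])) (to_pmf (g True))"
      using True by (simp add: map_bind_pmf map_pmf_comp o_def map_pmf_const bind_return_pmf' map_pmf_def[symmetric])
    then show ?thesis using True Qry.IH[OF rangeI[of g True]] by simp
  next
    case False
    have "map_pmf (run cmp h) (to_pmf (Qry i j g)) = map_pmf (run cmp (h @ [(i, j, False)])) (to_pmf (g False))"
      using False by (simp add: map_bind_pmf map_pmf_comp o_def map_pmf_const bind_return_pmf' map_pmf_def[symmetric] bind_pmf_const)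
    then show ?thesis using False Qry.IH[OF rangeI[of g False]] by simp
  qed
next
  case (Rnd N g)
  then show ?case by (simp add: map_bind_pmf)
qed

lemma rexec_bind: "rexec cmp (rbind t f) h = bind_pmf (rexec cmp t h) (\<lambda>(a, h'). rexec cmp (f a) h')"
  by (induction t arbitrary: h) (auto simp: bind_return_pmf bind_assoc_pmf)

primrec ok :: "nat \<Rightarrow> ('a \<Rightarrow> nat \<Rightarrow> bool) \<Rightarrow> 'a rt \<Rightarrow> nat \<Rightarrow> bool" where
  "ok n Q (Ret a) B = Q a B"
| "ok n Q (Qry i j g) B = (0 < B \<and> i < n \<and> j < n \<and> (\<forall>b. ok n Q (g b) (B - 1)))"
| "ok n Q (Rnd N g) B = (\<forall>u < max 1 N. ok n Q (g u) B)"

lemma ok_to_pmf: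
  assumes "ok n (\<lambda>k B'. k < n) t B" "T \<in> set_pmf (to_pmf t)"
  shows "wf_tree n T \<and> height T \<le> B"
  using assms
proof (induction t arbitrary: B T)
  case (Ret x)
  then show ?case by auto
next
  case (Qry i j g)
  from Qry.prems obtain a b where ab: "a \<in> set_pmf (to_pmf (g True))" "b \<in> set_pmf (to_pmf (g False))"
    and T: "T = Query i j (\<lambda>x. if x then a else b)" by auto
  have "wf_tree n a \<and> height a \<le> B - 1" using Qry.IH[OF rangeI[of g True], of "B-1" a] Qry.prems ab by auto
  moreover have "wf_tree n b \<and> height b \<le> B - 1" using Qry.IH[OF rangeI[of g False], of "B-1" b] Qry.prems ab by auto
  ultimately show ?case using T Qry.prems by auto
next
  case (Rnd N g)
  from Rnd.prems obtain u where u: "u < max 1 N" "T \<in> set_pmf (to_pmf (g u))" by auto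
  then show ?case using Rnd.IH[OF rangeI[of g u], of B T] Rnd.prems by auto
qed

lemma ok_bind: "ok n (\<lambda>a B'. ok n Q (f a) B') t B \<Longrightarrow> ok n Q (rbind t f) B"
  by (induction t arbitrary: B) auto

lemma ok_mono: "ok n Q t B \<Longrightarrow> (\<And>a B'. Q a B' \<Longrightarrow> Q' a B') \<Longrightarrow> ok n Q' t B"
  by (induction t arbitrary: B) auto

lemma set_rexec_ok:
  assumes "ok n Q t B" "(a, h') \<in> set_pmf (rexec cmp t h)"
  shows "\<exists>B'. Q a B'"
  using assms
proof (induction t arbitrary: B h)
  case (Qry i j g)
  then show ?case by (metis ok.simps(2) rangeI rexec.simps(2))
next
  case (Rnd N g)
  then show ?case by (auto) (metis lessThan_iff rangeI set_upmf)
qed auto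

primrec qall :: "(nat \<times> nat) list \<Rightarrow> (nat \<times> nat \<times> bool) list rt" where
  "qall [] = Ret []"
| "qall (p # ps) = Qry (fst p) (snd p) (\<lambda>b. rbind (qall ps) (\<lambda>rs. Ret ((fst p, snd p, b) # rs)))"

definition consistent :: "(nat \<Rightarrow> real) \<Rightarrow> (nat \<times> nat \<times> bool) list \<Rightarrow> bool" where
  "consistent x rs \<longleftrightarrow> (\<forall>(a, b, ans) \<in> set rs. \<bar>x a - x b\<bar> > 1 \<longrightarrow> (ans \<longleftrightarrow> x a \<ge> x b))"

definition prs :: "(nat \<times> nat \<times> bool) list \<Rightarrow> (nat \<times> nat) list" where
  "prs rs = map (\<lambda>(a, b, _). (a, b)) rs"

lemma qall_exec:
  assumes "valid_comparator x cmp" "(rs, h') \<in> set_pmf (rexec cmp (qall ps) h)"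
  shows "prs rs = ps \<and> consistent x rs"
  using assms(2)
proof (induction ps arbitrary: h rs h')
  case Nil
  then show ?case by (simp add: prs_def consistent_def)
next
  case (Cons p ps)
  obtain a b where p: "p = (a, b)" by force
  let ?h1 = "h @ [(a, b, cmp h a b)]"
  from Cons.prems obtain rs1 where rs1: "(rs1, h') \<in> set_pmf (rexec cmp (qall ps) ?h1)"
    and rs: "rs = (a, b, cmp h a b) # rs1"
    by (auto simp: p rexec_bind split: prod.splits)
  from Cons.IH[OF rs1] have "prs rs1 = ps" "consistent x rs1" by auto
  moreover have "\<bar>x a - x b\<bar> > 1 \<longrightarrow> (cmp h a b \<longleftrightarrow> x a \<ge> x b)"
    using assms(1) unfolding valid_comparator_def by blast
  ultimately show ?case by (simp add: rs p prs_def consistent_def)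
qed

lemma ok_qall:
  assumes "\<forall>(a, b) \<in> set ps. a < n \<and> b < n" "length ps \<le> B"
  shows "ok n (\<lambda>rs B'. B' = B - length ps \<and> prs rs = ps) (qall ps) B"
  using assms
proof (induction ps arbitrary: B)
  case Nil
  then show ?case by (simp add: prs_def)
next
  case (Cons p ps)
  obtain a b where p: "p = (a, b)" by force
  have "ok n (\<lambda>rs B'. B' = (B - 1) - length ps \<and> prs rs = ps) (qall ps) (B - 1)"
    using Cons.IH[of "B - 1"] Cons.prems by auto
  then have "ok n (\<lambda>rs B'. ok n (\<lambda>rs B'. B' = B - length (p # ps) \<and> prs rs = p # ps) (Ret ((a, b, bb) # rs)) B') (qall ps) (B - 1)" for bb
    by (rule ok_mono) (simp add: prs_def p)
  then show ?case using Cons.prems by (auto simp: p intro!: ok_bind)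
qed

primrec rrp :: "nat list \<Rightarrow> (nat \<times> nat) list" where
  "rrp [] = []"
| "rrp (a # as) = map (\<lambda>b. (a, b)) as @ rrp as"

lemma length_rrp: "2 * length (rrp F) = length F * (length F - 1)"
proof (induction F)
  case Nil
  then show ?case by simp
next
  case (Cons a F)
  then show ?case by (cases F) (auto simp: algebra_simps)
qed

lemma rrp_mem: "a \<in> set F \<Longrightarrow> b \<in> set F \<Longrightarrow> a \<noteq> b \<Longrightarrow> (a, b) \<in> set (rrp F) \<or> (b, a) \<in> set (rrp F)"
  by (induction F) auto

lemma rrp_set: "(a, b) \<in> set (rrp F) \<Longrightarrow> a \<in> set F \<and> b \<in> set F"
  by (induction F) auto

definition beats :: "(nat \<times> nat \<times> bool) list \<Rightarrow> nat \<Rightarrow> nat \<Rightarrow> bool" where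
  "beats rs a b \<longleftrightarrow> (a, b, True) \<in> set rs \<or> (b, a, False) \<in> set rs"

definition wins :: "nat list \<Rightarrow> (nat \<times> nat \<times> bool) list \<Rightarrow> nat \<Rightarrow> nat" where
  "wins F rs a = card {z \<in> set F. z \<noteq> a \<and> beats rs a z}"

definition best :: "nat list \<Rightarrow> (nat \<times> nat \<times> bool) list \<Rightarrow> nat" where
  "best F rs = (if F = [] then 0 else foldl (\<lambda>b a. if wins F rs b < wins F rs a then a else b) (hd F) F)"

lemma foldl_argmax:
  fixes f :: "nat \<Rightarrow> nat"
  shows "foldl (\<lambda>b a. if f b < f a then a else b) b0 xs \<in> insert b0 (set xs) \<and>
    f b0 \<le> f (foldl (\<lambda>b a. if f b < f a then a else b) b0 xs) \<and>
    (\<forall>a\<in>set xs. f a \<le> f (foldl (\<lambda>b a. if f b < f a then a else b) b0 xs))"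
proof (induction xs arbitrary: b0)
  case Nil
  then show ?case by simp
next
  case (Cons y xs)
  show ?case
  proof (cases "f b0 < f y")
    case True
    then show ?thesis using Cons[of y] by auto
  next
    case False
    then show ?thesis using Cons[of b0] by auto
  qed
qed

lemma best_prop:
  assumes "F \<noteq> []"
  shows "best F rs \<in> set F \<and> (\<forall>a\<in>set F. wins F rs a \<le> wins F rs (best F rs))"
  using foldl_argmax[of "wins F rs" "hd F" F] assms by (auto simp: best_def)

lemma beats_sound:
  assumes "consistent x rs" "beats rs a b"
  shows "\<not> (x b > x a + 1)"
  using assms unfolding consistent_def beats_def by force

lemma beats_complete:
  assumes "consistent x rs" "prs rs = rrp F" "a \<in> set F" "b \<in> set F" "a \<noteq> b" "x a > x b + 1"
  shows "beats rs a b"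
proof -
  from rrp_mem[OF assms(3-5)] assms(2)
  have "(a, b) \<in> set (prs rs) \<or> (b, a) \<in> set (prs rs)" by simp
  then obtain ans where "(a, b, ans) \<in> set rs \<or> (b, a, ans) \<in> set rs"
    unfolding prs_def by force
  then show ?thesis using assms(1,6) unfolding consistent_def beats_def by force
qed

lemma rr_correct:
  assumes "consistent x rs" "prs rs = rrp F" "F \<noteq> []" "y \<in> set F"
  shows "x y \<le> x (best F rs) + 2"
proof (rule ccontr)
  let ?w = "best F rs"
  assume "\<not> ?thesis"
  then have gt: "x y > x ?w + 2" by simp
  have w: "?w \<in> set F" and wmax: "wins F rs y \<le> wins F rs ?w"
    using best_prop[OF assms(3)] assms(4) by auto
  have yw: "y \<noteq> ?w" using gt by auto
  have sub: "{z \<in> set F. z \<noteq> ?w \<and> beats rs ?w z} \<subseteq> {z \<in> set F. z \<noteq> y \<and> beats rs y z}"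
  proof
    fix z assume z: "z \<in> {z \<in> set F. z \<noteq> ?w \<and> beats rs ?w z}"
    then have "\<not> (x z > x ?w + 1)" using beats_sound[OF assms(1)] by auto
    then have zy: "z \<noteq> y" and "x y > x z + 1" using gt by auto
    then have "beats rs y z" using beats_complete[OF assms(1,2) assms(4), of z] z by auto
    then show "z \<in> {z \<in> set F. z \<noteq> y \<and> beats rs y z}" using z zy by auto
  qed
  have "?w \<in> {z \<in> set F. z \<noteq> y \<and> beats rs y z}"
    using beats_complete[OF assms(1,2) assms(4) w] yw gt w by auto
  moreover have "?w \<notin> {z \<in> set F. z \<noteq> ?w \<and> beats rs ?w z}" by auto
  moreover note w
  ultimately have "{z \<in> set F. z \<noteq> ?w \<and> beats rs ?w z} \<subset> {z \<in> set F. z \<noteq> y \<and> beats rs y z}"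
    using sub by blast
  then have "wins F rs ?w < wins F rs y" unfolding wins_def by (intro psubset_card_mono) auto
  then show False using wmax by simp
qed

definition RR :: "nat list \<Rightarrow> nat rt" where
  "RR F = rbind (qall (rrp F)) (\<lambda>rs. Ret (best F rs))"

lemma RR_ok:
  assumes "set F \<subseteq> {..<n}" "0 < n" "length F * (length F - 1) div 2 \<le> B"
  shows "ok n (\<lambda>k B'. k < n) (RR F) B"
proof -
  have "length (rrp F) \<le> B" using length_rrp[of F] assms(3) by simp
  moreover have "\<forall>(a, b) \<in> set (rrp F). a < n \<and> b < n" using rrp_set assms(1) by blast
  ultimately have "ok n (\<lambda>rs B'. B' = B - length (rrp F) \<and> prs rs = rrp F) (qall (rrp F)) B" by (rule ok_qall[rotated])
  then have "ok n (\<lambda>rs B'. ok n (\<lambda>k B'. k < n) (Ret (best F rs)) B') (qall (rrp F)) B"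
  proof (rule ok_mono)
    fix rs B' show "ok n (\<lambda>k B'. k < n) (Ret (best F rs)) B'"
      using best_prop[of F rs] assms(1,2) by (cases "F = []") (auto simp: best_def)
  qed
  then show ?thesis unfolding RR_def by (rule ok_bind)
qed

lemma RR_correct:
  assumes "valid_comparator x cmp" "(w, h') \<in> set_pmf (rexec cmp (RR F) h)" "F \<noteq> []"
  shows "w \<in> set F \<and> (\<forall>y\<in>set F. x y \<le> x w + 2)"
proof -
  from assms(2) obtain rs h1 where rs: "(rs, h1) \<in> set_pmf (rexec cmp (qall (rrp F)) h)"
    and w: "w = best F rs" by (auto simp: RR_def rexec_bind)
  from qall_exec[OF assms(1) rs] have "prs rs = rrp F" "consistent x rs" by auto
  then show ?thesis using rr_correct best_prop assms(3) w by blast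
qed

definition partner :: "nat \<Rightarrow> nat \<Rightarrow> nat \<Rightarrow> nat" where
  "partner l j i = (j + l - i) mod l"

lemma partner_less: "0 < l \<Longrightarrow> partner l j i < l"
  by (simp add: partner_def)

lemma partner_add: "i < l \<Longrightarrow> j < l \<Longrightarrow> (partner l j i + i) mod l = j"
proof -
  assume "i < l" "j < l"
  have "(partner l j i + i) mod l = ((j + l - i) + i) mod l"
    unfolding partner_def by (simp add: mod_add_left_eq)
  also have "(j + l - i) + i = j + l" using \<open>i < l\<close> by simp
  finally show ?thesis using \<open>j < l\<close> by simp
qed

lemma add_mod_inj_le: "(k1::nat) \<le> k2 \<Longrightarrow> k2 < l \<Longrightarrow> (k1 + i) mod l = (k2 + i) mod l \<Longrightarrow> k1 = k2"
proof -
  assume a: "k1 \<le> k2" "k2 < l" "(k1 + i) mod l = (k2 + i) mod l"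
  then have "l dvd (k2 + i) - (k1 + i)" using mod_eq_dvd_iff_nat[of "k1 + i" "k2 + i" l] by simp
  then have "l dvd k2 - k1" by simp
  moreover have "k2 - k1 < l" using a by simp
  ultimately have "\<not> 0 < k2 - k1" using nat_dvd_not_less by blast
  then show ?thesis using a by simp
qed

lemma add_mod_inj:
  assumes "(k1::nat) < l" "k2 < l" "(k1 + i) mod l = (k2 + i) mod l"
  shows "k1 = k2"
proof (cases "k1 \<le> k2")
  case True
  then show ?thesis using add_mod_inj_le[of k1 k2 l i] assms by blast
next
  case False
  then show ?thesis using add_mod_inj_le[of k2 k1 l i] assms by simp
qed

lemma len_filter_upt: "length (filter P [0..<l]) = card {i. i < l \<and> P i}"
proof -
  have "{i. i < length [0..<l] \<and> P ([0..<l] ! i)} = {i. i < l \<and> P i}" by auto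
  then show ?thesis by (simp add: length_filter_conv_card)
qed

lemma partner_char:
  assumes "i < l" "j < l" "k < l"
  shows "partner l j i = k \<longleftrightarrow> (k + i) mod l = j"
proof
  assume "partner l j i = k"
  then show "(k + i) mod l = j" using partner_add[OF assms(1,2)] by simp
next
  assume h: "(k + i) mod l = j"
  have pl: "partner l j i < l" using assms(1) by (simp add: partner_less)
  have "(partner l j i + i) mod l = (k + i) mod l" using partner_add[OF assms(1,2)] h by simp
  then show "partner l j i = k" using add_mod_inj[OF pl assms(3)] by blast
qed

lemma partner_invol:
  assumes "i < l" "j < l"
  shows "partner l j (partner l j i) = i"
proof -
  have p: "partner l j i < l" using assms by (simp add: partner_less)
  have "(i + partner l j i) mod l = j" using partner_add[OF assms] by (simp add: add.commute)
  then show ?thesis by (rule iffD2[OF partner_char[OF p assms(2) assms(1)]])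
qed

lemma partner_inj: 
  assumes "p0 < l" "j1 < l" "j2 < l" "partner l j1 p0 = partner l j2 p0"
  shows "j1 = j2"
proof -
  have "j1 = (partner l j1 p0 + p0) mod l" using partner_add[OF assms(1,2)] by (rule sym)
  also have "\<dots> = (partner l j2 p0 + p0) mod l" by (simp only: assms(4))
  also have "\<dots> = j2" using partner_add[OF assms(1,3)] .
  finally show ?thesis .
qed

lemma fix_card:
  assumes "j < l"
  shows "card {i. i < l \<and> partner l j i = i} \<le> 2"
proof -
  let ?S = "{i. i < l \<and> partner l j i = i}"
  show ?thesis
  proof (cases "?S = {}")
    case True then show ?thesis by (subst True) simp
  next
    case False
    let ?a = "Min ?S"
    have fin: "finite ?S" by simp
    have aS: "?a \<in> ?S" using Min_in[OF fin False] .
    have "?S \<subseteq> {?a, ?a + l div 2}"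
    proof
      fix i assume iS: "i \<in> ?S"
      have ai: "?a \<le> i" using Min_le[OF fin iS] .
      have i2: "(i + i) mod l = j" using iS partner_char[of i l j i] assms by auto
      have a2: "(?a + ?a) mod l = j" using aS partner_char[of ?a l j ?a] assms by auto
      show "i \<in> {?a, ?a + l div 2}"
      proof (cases "i = ?a")
        case True then show ?thesis by simp
      next
        case False
        then have lt: "?a < i" using ai by simp
        have "l dvd (i + i) - (?a + ?a)" using i2 a2 lt
          using mod_eq_dvd_iff_nat[of "?a + ?a" "i + i" l] by simp
        then obtain k where k: "(i + i) - (?a + ?a) = l * k" by (auto simp: dvd_def)
        have "i < l" using iS by simp
        then have "0 < (i + i) - (?a + ?a)" "(i + i) - (?a + ?a) < 2 * l" using lt by auto
        then have k0: "k \<noteq> 0" using k by auto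
        have k2: "\<not> 2 \<le> k"
        proof
          assume "2 \<le> k"
          then have "l * 2 \<le> l * k" by (rule mult_le_mono2)
          then show False using k \<open>(i + i) - (?a + ?a) < 2 * l\<close> by simp
        qed
        have "k = 1" using k0 k2 by simp
        then have "(i + i) - (?a + ?a) = l" using k by simp
        then have "i = ?a + l div 2" using lt by presburger
        then show ?thesis by simp
      qed
    qed
    then have "card ?S \<le> card {?a, ?a + l div 2}" by (rule card_mono[rotated]) simp
    also have "\<dots> \<le> 2" by (simp add: card_insert_if)
    finally show ?thesis .
  qed
qed

definition ltp :: "nat \<Rightarrow> nat \<Rightarrow> nat list" where
  "ltp l j = filter (\<lambda>i. i < partner l j i) [0..<l]"
definition fxp :: "nat \<Rightarrow> nat \<Rightarrow> nat list" where
  "fxp l j = filter (\<lambda>i. partner l j i = i) [0..<l]"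

lemma arith_helper: "(A::nat) = B \<Longrightarrow> F + N = l \<Longrightarrow> A' + B' = N \<Longrightarrow> A' = A \<Longrightarrow> B' = B \<Longrightarrow> F + 2 * A = l"
  by simp

lemma count_pairs:
  assumes "j < l"
  shows "length (fxp l j) + 2 * length (ltp l j) = l"
proof -
  let ?P = "\<lambda>i. partner l j i"
  have c1: "length (ltp l j) = card {i. i < l \<and> i < ?P i}"
    unfolding ltp_def by (simp add: len_filter_upt)
  have c2: "length (filter (\<lambda>i. ?P i < i) [0..<l]) = card {i. i < l \<and> ?P i < i}"
    by (simp add: len_filter_upt)
  have c3: "length (fxp l j) = card {i. i < l \<and> ?P i = i}"
    unfolding fxp_def by (simp add: len_filter_upt)
  have bij: "bij_betw ?P {i. i < l \<and> i < ?P i} {i. i < l \<and> ?P i < i}"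
  proof (rule bij_betw_byWitness[where f' = ?P])
    show "\<forall>a\<in>{i. i < l \<and> i < ?P i}. ?P (?P a) = a" using partner_invol[OF _ assms] by blast
    show "\<forall>a\<in>{i. i < l \<and> ?P i < i}. ?P (?P a) = a" using partner_invol[OF _ assms] by blast
    show "?P ` {i. i < l \<and> i < ?P i} \<subseteq> {i. i < l \<and> ?P i < i}"
    proof
      fix y assume "y \<in> ?P ` {i. i < l \<and> i < ?P i}"
      then obtain i where i: "i < l" "i < ?P i" "y = ?P i" by auto
      have "?P i < l" using partner_less assms by simp
      moreover have "?P y = i" using i partner_invol[OF i(1) assms] by simp
      ultimately show "y \<in> {i. i < l \<and> ?P i < i}" using i by simp
    qed
    show "?P ` {i. i < l \<and> ?P i < i} \<subseteq> {i. i < l \<and> i < ?P i}"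
    proof
      fix y assume "y \<in> ?P ` {i. i < l \<and> ?P i < i}"
      then obtain i where i: "i < l" "?P i < i" "y = ?P i" by auto
      have "?P i < l" using partner_less assms by simp
      moreover have "?P y = i" using i partner_invol[OF i(1) assms] by simp
      ultimately show "y \<in> {i. i < l \<and> i < ?P i}" using i by simp
    qed
  qed
  have e1: "length (filter (\<lambda>i. i < ?P i) [0..<l]) = length (filter (\<lambda>i. ?P i < i) [0..<l])"
    using c1 c2 bij_betw_same_card[OF bij] unfolding ltp_def by simp
  have e2: "length (filter (\<lambda>i. ?P i = i) [0..<l]) + length (filter (\<lambda>i. \<not> ?P i = i) [0..<l]) = l"
    using sum_length_filter_compl[of "\<lambda>i. ?P i = i" "[0..<l]"] by simp
  have e3: "length (filter (\<lambda>i. i < ?P i) (filter (\<lambda>i. \<not> ?P i = i) [0..<l]))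
      + length (filter (\<lambda>i. \<not> i < ?P i) (filter (\<lambda>i. \<not> ?P i = i) [0..<l])) = length (filter (\<lambda>i. \<not> ?P i = i) [0..<l])"
    by (rule sum_length_filter_compl)
  have e4: "length (filter (\<lambda>i. i < ?P i) (filter (\<lambda>i. \<not> ?P i = i) [0..<l])) = length (filter (\<lambda>i. i < ?P i) [0..<l])"
    unfolding filter_filter by (rule arg_cong[where f=length], rule filter_cong) auto
  have e5: "length (filter (\<lambda>i. \<not> i < ?P i) (filter (\<lambda>i. \<not> ?P i = i) [0..<l])) = length (filter (\<lambda>i. ?P i < i) [0..<l])"
    unfolding filter_filter by (rule arg_cong[where f=length], rule filter_cong) auto
  have "length (filter (\<lambda>i. ?P i = i) [0..<l]) + 2 * length (filter (\<lambda>i. i < ?P i) [0..<l]) = l"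
    by (rule arith_helper[OF e1 e2 e3 e4 e5])
  then show ?thesis unfolding ltp_def fxp_def .
qed

lemma fxp_len: "j < l \<Longrightarrow> length (fxp l j) \<le> 2"
  using fix_card[of j l] 
  unfolding fxp_def by (simp add: len_filter_upt)

definition winner :: "nat \<times> nat \<times> bool \<Rightarrow> nat" where
  "winner r = (case r of (a, b, ans) \<Rightarrow> if ans then a else b)"

primrec rndl :: "nat \<Rightarrow> nat \<Rightarrow> nat list rt" where
  "rndl N 0 = Ret []"
| "rndl N (Suc m) = Rnd N (\<lambda>u. rbind (rndl N m) (\<lambda>us. Ret (u # us)))"

primrec rl :: "nat \<Rightarrow> nat \<Rightarrow> nat list pmf" where
  "rl N 0 = return_pmf []"
| "rl N (Suc m) = map_pmf (\<lambda>(u, us). u # us) (pair_pmf (upmf N) (rl N m))"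

lemma rexec_rndl: "rexec cmp (rndl N m) h = map_pmf (\<lambda>us. (us, h)) (rl N m)"
proof (induction m)
  case 0
  then show ?case by simp
next
  case (Suc m)
  show ?case
    by (simp add: Suc rexec_bind pair_pmf_def map_pmf_def bind_assoc_pmf bind_return_pmf)
qed

lemma ok_rndl: "ok n (\<lambda>us B'. B' = B \<and> length us = m \<and> (\<forall>u\<in>set us. u < max 1 N)) (rndl N m) B"
proof (induction m)
  case 0
  then show ?case by simp
next
  case (Suc m)
  have "ok n (\<lambda>us B'. ok n (\<lambda>us B'. B' = B \<and> length us = Suc m \<and> (\<forall>u\<in>set us. u < max 1 N)) (Ret (u # us)) B') (rndl N m) B"
    if "u < max 1 N" for u
    using Suc by (rule ok_mono) (use that in auto)
  then show ?case by (auto intro!: ok_bind)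
qed

definition kp :: "nat list \<Rightarrow> nat \<Rightarrow> (nat \<times> nat) list" where
  "kp L j = map (\<lambda>i. (L ! i, L ! partner (length L) j i)) (ltp (length L) j)"

definition fx :: "nat list \<Rightarrow> nat \<Rightarrow> nat list" where
  "fx L j = map (\<lambda>i. L ! i) (fxp (length L) j)"

definition round :: "nat \<Rightarrow> nat list \<Rightarrow> (nat list \<times> nat list) rt" where
  "round m L = Rnd (length L) (\<lambda>j. rbind (rndl (length L) m) (\<lambda>idx.
      rbind (qall (kp L j)) (\<lambda>rs. Ret (fx L j @ map winner rs, map (\<lambda>i. L ! i) idx))))"

lemma kp_set:
  assumes "j < length L" "(a, b) \<in> set (kp L j)"
  shows "a \<in> set L \<and> b \<in> set L"
proof -
  from assms(2) obtain i where i: "i \<in> set (ltp (length L) j)" "a = L ! i" "b = L ! partner (length L) j i"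
    unfolding kp_def by auto
  have il: "i < length L" using i(1) unfolding ltp_def by simp
  have pl: "partner (length L) j i < length L" using partner_less[of "length L" j i] assms(1) by linarith
  show ?thesis using i(2,3) il pl nth_mem by blast
qed

lemma fx_set: "set (fx L j) \<subseteq> set L"
proof
  fix a assume "a \<in> set (fx L j)"
  then obtain i where i: "i \<in> set (fxp (length L) j)" "a = L ! i" unfolding fx_def by auto
  have il: "i < length L" using i(1) unfolding fxp_def by simp
  show "a \<in> set L" using i(2) il nth_mem by blast
qed

lemma winner_set:
  assumes "prs rs = kp L j" "j < length L" "r \<in> set rs"
  shows "winner r \<in> set L"
proof -
  obtain a b ans where r: "r = (a, b, ans)" by (cases r) auto
  have "(a, b) \<in> set (prs rs)" using assms(3) r unfolding prs_def by force
  then have "a \<in> set L \<and> b \<in> set L" using kp_set[OF assms(2)] assms(1) by simp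
  then show ?thesis by (simp add: r winner_def)
qed

lemma length_prs: "length (prs rs) = length rs"
  by (simp add: prs_def)

lemma ok_round:
  assumes "L \<noteq> []" "set L \<subseteq> {..<n}" "length L \<le> B"
  shows "ok n (\<lambda>(L', S) B'. B' + length L = B + length L' \<and> L' \<noteq> [] \<and> set L' \<subseteq> set L \<and>
      set S \<subseteq> set L \<and> length S = m \<and> 2 * length L' \<le> length L + 2) (round m L) B"
proof -
  let ?l = "length L"
  have l: "0 < ?l" using assms(1) by simp
  let ?Q = "\<lambda>(L', S) B'. B' + length L = B + length L' \<and> L' \<noteq> [] \<and> set L' \<subseteq> set L \<and>
      set S \<subseteq> set L \<and> length S = m \<and> 2 * length L' \<le> length L + 2"
  have main: "ok n ?Q (rbind (qall (kp L j)) (\<lambda>rs. Ret (fx L j @ map winner rs, map (\<lambda>i. L ! i) idx))) B"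
    if j: "j < ?l" and idx: "length idx = m" "\<forall>u\<in>set idx. u < ?l" for j idx
  proof -
    have cnt: "length (fxp ?l j) + 2 * length (ltp ?l j) = ?l" using count_pairs[OF j] .
    have fxl: "length (fxp ?l j) \<le> 2" using fxp_len[OF j] .
    have lkp: "length (kp L j) = length (ltp ?l j)" by (simp add: kp_def)
    have kpn: "\<forall>(a, b) \<in> set (kp L j). a < n \<and> b < n" using kp_set[OF j] assms(2) by blast
    have "length (kp L j) \<le> B" using lkp cnt assms(3) by linarith
    from ok_qall[OF kpn this]
    have "ok n (\<lambda>rs B'. B' = B - length (kp L j) \<and> prs rs = kp L j) (qall (kp L j)) B" .
    then have "ok n (\<lambda>rs B'. ok n ?Q (Ret (fx L j @ map winner rs, map (\<lambda>i. L ! i) idx)) B') (qall (kp L j)) B"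
    proof (rule ok_mono)
      fix rs B'
      assume h: "B' = B - length (kp L j) \<and> prs rs = kp L j"
      then have lrs: "length rs = length (ltp ?l j)" using lkp length_prs by metis
      have lfx: "length (fx L j) = length (fxp ?l j)" by (simp add: fx_def)
      have s1: "set (fx L j @ map winner rs) \<subseteq> set L"
        using fx_set winner_set[OF conjunct2[OF h] j] by auto
      have s2: "set (map (\<lambda>i. L ! i) idx) \<subseteq> set L" using idx by auto
      have ne: "fx L j @ map winner rs \<noteq> []" using lrs lfx cnt l by auto
      show "ok n ?Q (Ret (fx L j @ map winner rs, map (\<lambda>i. L ! i) idx)) B'"
        using h lrs lfx cnt fxl s1 s2 ne idx \<open>length (kp L j) \<le> B\<close> lkp by auto
    qed
    then show ?thesis by (rule ok_bind)
  qed
  show ?thesis unfolding round_def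
  proof (simp only: ok.simps, intro allI impI)
    fix j assume "j < max 1 ?l"
    then have j: "j < ?l" using l by simp
    have "ok n (\<lambda>us B'. B' = B \<and> length us = m \<and> (\<forall>u\<in>set us. u < max 1 ?l)) (rndl ?l m) B"
      by (rule ok_rndl)
    then have "ok n (\<lambda>idx B'. ok n ?Q (rbind (qall (kp L j)) (\<lambda>rs. Ret (fx L j @ map winner rs, map (\<lambda>i. L ! i) idx))) B') (rndl ?l m) B"
      by (rule ok_mono) (use main[OF j] l in auto)
    then show "ok n ?Q (rbind (rndl ?l m) (\<lambda>idx. rbind (qall (kp L j)) (\<lambda>rs. Ret (fx L j @ map winner rs, map (\<lambda>i. L ! i) idx)))) B"
      by (rule ok_bind)
  qed
qed

lemma key_ineq:
  fixes d :: real
  assumes "0 \<le> d" "d \<le> 1" "1 \<le> m"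
  shows "d * (1 - d) ^ m \<le> 1 / real m"
proof -
  have b: "1 + real m * d \<le> (1 + d) ^ m" using Bernoulli_inequality[of d m] assms by simp
  have p0: "0 \<le> (1 - d) ^ m" using assms by simp
  have "(1 - d) ^ m * (1 + d) ^ m = (1 - d * d) ^ m" by (simp add: power_mult_distrib[symmetric] algebra_simps)
  also have "\<dots> \<le> 1" using assms by (intro power_le_one) (auto simp: mult_le_one)
  finally have c: "(1 - d) ^ m * (1 + d) ^ m \<le> 1" .
  have "(1 - d) ^ m * (1 + real m * d) \<le> (1 - d) ^ m * (1 + d) ^ m"
    using b p0 by (rule mult_left_mono)
  then have e: "(1 - d) ^ m * (1 + real m * d) \<le> 1" using c by linarith
  have "real m * (d * (1 - d) ^ m) \<le> (1 - d) ^ m * (1 + real m * d)"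
    using p0 by (simp add: algebra_simps)
  then have "real m * (d * (1 - d) ^ m) \<le> 1" using e by linarith
  moreover have "0 < real m" using assms by simp
  ultimately show ?thesis by (simp add: field_simps)
qed

lemma prob_upmf:
  assumes "0 < N"
  shows "measure_pmf.prob (upmf N) A = card ({..<N} \<inter> A) / N"
  unfolding upmf_def using assms by (subst measure_pmf_of_set) auto

lemma prob_rl:
  assumes "0 < N"
  shows "measure_pmf.prob (rl N m) {us. \<forall>u\<in>set us. P u} = (card {u. u < N \<and> P u} / N) ^ m"
proof (induction m)
  case 0
  then show ?case by simp
next
  case (Suc m)
  have pre: "(\<lambda>(u, us). u # us) -` {us. \<forall>u\<in>set us. P u} = {u. P u} \<times> {us. \<forall>u\<in>set us. P u}"
    by auto
  have "measure_pmf.prob (rl N (Suc m)) {us. \<forall>u\<in>set us. P u}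
     = measure_pmf.prob (pair_pmf (upmf N) (rl N m)) ({u. P u} \<times> {us. \<forall>u\<in>set us. P u})"
    by (simp only: rl.simps measure_map_pmf pre)
  also have "\<dots> = measure_pmf.prob (upmf N) {u. P u} * measure_pmf.prob (rl N m) {us. \<forall>u\<in>set us. P u}"
    by (rule measure_pmf_prob_product) auto
  also have "measure_pmf.prob (upmf N) {u. P u} = card {u. u < N \<and> P u} / N"
    using prob_upmf[OF assms] by (simp add: Int_def)
  finally show ?case using Suc by simp
qed

lemma emeasure_zero_support:
  assumes "\<And>y. y \<in> set_pmf p \<Longrightarrow> y \<notin> E"
  shows "emeasure (measure_pmf p) E = 0"
proof -
  have "measure_pmf.prob p E = 0" using assms by (subst measure_pmf_zero_iff) auto
  then show ?thesis by (simp add: measure_pmf.emeasure_eq_measure)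
qed

lemma in_prs: "(a, b) \<in> set (prs rs) \<Longrightarrow> \<exists>ans. (a, b, ans) \<in> set rs"
  unfolding prs_def by force

lemma survive:
  assumes cons: "consistent x rs" and pr: "prs rs = kp L j" and j: "j < length L"
    and p0: "p0 < length L" "L ! p0 = mu"
    and nb: "\<not> (partner (length L) j p0 \<noteq> p0 \<and> x mu - 1 \<le> x (L ! partner (length L) j p0))"
  shows "mu \<in> set (fx L j @ map winner rs)"
proof -
  let ?l = "length L"
  let ?q = "partner ?l j p0"
  have ql: "?q < ?l" using partner_less[of ?l j p0] j by linarith
  show ?thesis
  proof (cases "?q = p0")
    case True
    then have "p0 \<in> set (fxp ?l j)" unfolding fxp_def using p0 by simp
    then have "L ! p0 \<in> set (fx L j)" unfolding fx_def by simp
    then show ?thesis using p0 by simp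
  next
    case False
    then have low: "x (L ! ?q) < x mu - 1" using nb by simp
    show ?thesis
    proof (cases "p0 < ?q")
      case True
      then have "p0 \<in> set (ltp ?l j)" unfolding ltp_def using p0 by simp
      then have "(L ! p0, L ! ?q) \<in> set (kp L j)" unfolding kp_def by force
      then obtain ans where r: "(mu, L ! ?q, ans) \<in> set rs" using in_prs pr p0(2) by metis
      have "\<bar>x mu - x (L ! ?q)\<bar> > 1" using low by simp
      then have "ans" using cons r low unfolding consistent_def by fastforce
      then have "winner (mu, L ! ?q, ans) = mu" by (simp add: winner_def)
      then have "mu \<in> set (map winner rs)" using r by force
      then show ?thesis by simp
    next
      case False
      then have qp: "?q < p0" using \<open>?q \<noteq> p0\<close> by simp
      have inv: "partner ?l j ?q = p0" using partner_invol[OF p0(1) j] .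
      then have "?q \<in> set (ltp ?l j)" unfolding ltp_def using ql qp by simp
      then have "(L ! ?q, L ! partner ?l j ?q) \<in> set (kp L j)" unfolding kp_def by force
      then have "(L ! ?q, mu) \<in> set (kp L j)" using inv p0(2) by simp
      then obtain ans where r: "(L ! ?q, mu, ans) \<in> set rs" using in_prs pr by metis
      have "\<bar>x (L ! ?q) - x mu\<bar> > 1" using low by simp
      then have "\<not> ans" using cons r low unfolding consistent_def by fastforce
      then have "winner (L ! ?q, mu, ans) = mu" by (simp add: winner_def)
      then have "mu \<in> set (map winner rs)" using r by force
      then show ?thesis by simp
    qed
  qed
qed

lemma round_prob:
  assumes valid: "valid_comparator x cmp" and mu: "mu \<in> set L" and m: "1 \<le> m"
  shows "measure_pmf.prob (rexec cmp (round m L) h)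
     {y. mu \<notin> set (fst (fst y)) \<and> (\<forall>s\<in>set (snd (fst y)). x s < x mu - 1)} \<le> 1 / real m"
proof -
  define l where "l = length L"
  have l: "0 < l" using mu l_def by (cases L) auto
  obtain p0 where p0: "p0 < l" "L ! p0 = mu" using mu unfolding l_def by (metis in_set_conv_nth)
  define E where "E = {y :: (nat list \<times> nat list) \<times> history. mu \<notin> set (fst (fst y)) \<and> (\<forall>s\<in>set (snd (fst y)). x s < x mu - 1)}"
  define bad where "bad j \<longleftrightarrow> partner l j p0 \<noteq> p0 \<and> x mu - 1 \<le> x (L ! partner l j p0)" for j
  define P where "P u \<longleftrightarrow> x (L ! u) < x mu - 1" for u
  define c where "c = emeasure (measure_pmf (rl l m)) {us. \<forall>u\<in>set us. P u}"
  have inner: "emeasure (measure_pmf (rexec cmp (rbind (qall (kp L j))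
      (\<lambda>rs. Ret (fx L j @ map winner rs, map (\<lambda>i. L ! i) idx))) h1)) E
      \<le> indicator {j. bad j} j * indicator {us. \<forall>u\<in>set us. P u} idx" if j: "j < l" for j idx h1
  proof (cases "bad j \<and> (\<forall>u\<in>set idx. P u)")
    case True
    then show ?thesis using measure_pmf.emeasure_le_1 by simp
  next
    case False
    have "emeasure (measure_pmf (rexec cmp (rbind (qall (kp L j))
      (\<lambda>rs. Ret (fx L j @ map winner rs, map (\<lambda>i. L ! i) idx))) h1)) E = 0"
    proof (rule emeasure_zero_support)
      fix y assume y: "y \<in> set_pmf (rexec cmp (rbind (qall (kp L j))
        (\<lambda>rs. Ret (fx L j @ map winner rs, map (\<lambda>i. L ! i) idx))) h1)"
      then obtain rs h2 where rs: "(rs, h2) \<in> set_pmf (rexec cmp (qall (kp L j)) h1)"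
        and yeq: "y = ((fx L j @ map winner rs, map (\<lambda>i. L ! i) idx), h2)"
        by (auto simp: rexec_bind)
      from qall_exec[OF valid rs] have pr: "prs rs = kp L j" and cons: "consistent x rs" by auto
      show "y \<notin> E"
      proof
        assume "y \<in> E"
        then have A: "mu \<notin> set (fx L j @ map winner rs)"
          and B: "\<forall>s\<in>set (map (\<lambda>i. L ! i) idx). x s < x mu - 1"
          unfolding E_def yeq by auto
        from B have Pi: "\<forall>u\<in>set idx. P u" unfolding P_def by auto
        have "bad j"
        proof (rule ccontr)
          assume "\<not> bad j"
          then have "mu \<in> set (fx L j @ map winner rs)"
            using survive[OF cons pr, of p0 mu] j p0 unfolding bad_def l_def by blast
          then show False using A by simp
        qed
        then show False using False Pi by simp
      qed
    qed
    then show ?thesis by simp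
  qed
  have mid: "emeasure (measure_pmf (rexec cmp (rbind (rndl l m) (\<lambda>idx. rbind (qall (kp L j))
      (\<lambda>rs. Ret (fx L j @ map winner rs, map (\<lambda>i. L ! i) idx)))) h)) E \<le> c * indicator {j. bad j} j"
    if j: "j < l" for j
  proof -
    have "emeasure (measure_pmf (rexec cmp (rbind (rndl l m) (\<lambda>idx. rbind (qall (kp L j))
      (\<lambda>rs. Ret (fx L j @ map winner rs, map (\<lambda>i. L ! i) idx)))) h)) E
      \<le> (\<integral>\<^sup>+y. indicator {j. bad j} j * indicator {us. \<forall>u\<in>set us. P u} (fst y)
          \<partial>measure_pmf (rexec cmp (rndl l m) h))"
      unfolding rexec_bind[of cmp "rndl l m"] by (rule emeasure_bind_le) (auto simp: inner[OF j] split: prod.splits)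
    also have "\<dots> = indicator {j. bad j} j * c"
      unfolding rexec_rndl c_def by (simp add: nn_integral_cmult_indicator)
    finally show ?thesis by (simp add: mult.commute)
  qed
  have "emeasure (measure_pmf (rexec cmp (round m L) h)) E
      \<le> (\<integral>\<^sup>+j. c * indicator {j. bad j} j \<partial>measure_pmf (upmf l))"
    unfolding round_def l_def[symmetric] rexec.simps
    by (rule emeasure_bind_le) (use mid l in auto)
  also have "\<dots> = c * emeasure (measure_pmf (upmf l)) {j. bad j}"
    by (rule nn_integral_cmult_indicator) simp
  finally have em: "emeasure (measure_pmf (rexec cmp (round m L) h)) E \<le> c * emeasure (measure_pmf (upmf l)) {j. bad j}" .
  define S where "S = {q. q < l \<and> x mu - 1 \<le> x (L ! q)}"
  define t where "t = card S"
  have p0S: "p0 \<in> S" unfolding S_def using p0 by simp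
  have finS: "finite S" unfolding S_def by simp
  have t1: "1 \<le> t" unfolding t_def using p0S finS by (metis One_nat_def Suc_leI card_gt_0_iff empty_iff)
  have tl: "t \<le> l" unfolding t_def S_def by (rule order_trans[OF card_mono[of "{..<l}"]]) auto
  have cbad: "card ({..<l} \<inter> {j. bad j}) \<le> t - 1"
  proof -
    have inj: "inj_on (\<lambda>j. partner l j p0) ({..<l} \<inter> {j. bad j})"
      by (rule inj_onI) (use partner_inj[OF p0(1)] in auto)
    have sub: "(\<lambda>j. partner l j p0) ` ({..<l} \<inter> {j. bad j}) \<subseteq> S - {p0}"
      unfolding S_def bad_def using partner_less[of l] l by auto
    have "card ({..<l} \<inter> {j. bad j}) = card ((\<lambda>j. partner l j p0) ` ({..<l} \<inter> {j. bad j}))"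
      using card_image[OF inj] by simp
    also have "\<dots> \<le> card (S - {p0})" using sub finS by (intro card_mono) auto
    also have "\<dots> = t - 1" unfolding t_def using p0S finS by simp
    finally show ?thesis .
  qed
  have cP: "card {u. u < l \<and> P u} = l - t"
  proof -
    have "{u. u < l \<and> P u} = {..<l} - S" unfolding S_def P_def by auto
    then have "card {u. u < l \<and> P u} = card ({..<l} - S)" by simp
    also have "\<dots> = card {..<l} - card S" by (rule card_Diff_subset) (auto simp: S_def)
    finally show ?thesis unfolding t_def by simp
  qed
  have ceq: "c = ennreal ((real (l - t) / l) ^ m)"
    unfolding c_def measure_pmf.emeasure_eq_measure prob_rl[OF l] cP ..
  have beq: "emeasure (measure_pmf (upmf l)) {j. bad j} = ennreal (card ({..<l} \<inter> {j. bad j}) / l)"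
    unfolding measure_pmf.emeasure_eq_measure prob_upmf[OF l] ..
  define d where "d = real t / real l"
  have d0: "0 \<le> d" "d \<le> 1" unfolding d_def using tl l by auto
  have r1: "real (l - t) / l = 1 - d" unfolding d_def using tl l by (simp add: of_nat_diff field_simps)
  have r2: "real (card ({..<l} \<inter> {j. bad j})) / l \<le> d"
    unfolding d_def using cbad t1 l by (intro divide_right_mono) auto
  have "(real (l - t) / l) ^ m * (real (card ({..<l} \<inter> {j. bad j})) / l) \<le> (1 - d) ^ m * d"
    unfolding r1 using r2 d0 by (intro mult_left_mono) auto
  also have "\<dots> \<le> 1 / real m" using key_ineq[OF d0 m] by (simp add: mult.commute)
  finally have fin: "(real (l - t) / l) ^ m * (real (card ({..<l} \<inter> {j. bad j})) / l) \<le> 1 / real m" .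
  have "emeasure (measure_pmf (rexec cmp (round m L) h)) E \<le> ennreal (1 / real m)"
    using em unfolding ceq beq
    by (rule order_trans) (use fin in \<open>simp add: ennreal_mult''[symmetric] ennreal_leI\<close>)
  then show ?thesis unfolding E_def[symmetric] measure_pmf.emeasure_eq_measure
    using m by (simp add: ennreal_le_iff)
qed

primrec trial :: "nat \<Rightarrow> nat \<Rightarrow> nat list \<Rightarrow> nat list \<Rightarrow> nat list rt" where
  "trial m 0 L Facc = Ret (Facc @ L)"
| "trial m (Suc k) L Facc = rbind (round m L) (\<lambda>(L', S). trial m k L' (Facc @ S))"

lemma len_helper:
  assumes "(P::nat) * F + 2 \<le> P * (A + m + k * m) + l' + 2 * P" "2 * l' \<le> l + 2"
  shows "2 * P * F + 2 \<le> 2 * P * (A + Suc k * m) + l + 2 * (2 * P)"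
proof -
  have "2 * (P * F + 2) \<le> 2 * (P * (A + m + k * m) + l' + 2 * P)" using assms(1) by simp
  then have "2 * P * F + 4 \<le> 2 * P * (A + m + k * m) + 2 * l' + 4 * P" by (simp add: algebra_simps)
  then show ?thesis using assms(2) by (simp add: algebra_simps)
qed

lemma ok_trial:
  assumes "L \<noteq> []" "set L \<subseteq> {..<n}" "length L \<le> B"
  shows "ok n (\<lambda>F B'. B \<le> B' + length L \<and> set F \<subseteq> set Facc \<union> set L \<and>
     2 ^ k * length F + 2 \<le> 2 ^ k * (length Facc + k * m) + length L + 2 ^ (k + 1)) (trial m k L Facc) B"
  using assms
proof (induction k arbitrary: L Facc B)
  case 0
  then show ?case by simp
next
  case (Suc k)
  let ?Q = "\<lambda>F B'. B \<le> B' + length L \<and> set F \<subseteq> set Facc \<union> set L \<and>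
     2 ^ Suc k * length F + 2 \<le> 2 ^ Suc k * (length Facc + Suc k * m) + length L + 2 ^ (Suc k + 1)"
  from ok_round[OF Suc.prems, of m]
  have r: "ok n (\<lambda>(L', S) B'. B' + length L = B + length L' \<and> L' \<noteq> [] \<and> set L' \<subseteq> set L \<and>
      set S \<subseteq> set L \<and> length S = m \<and> 2 * length L' \<le> length L + 2) (round m L) B" .
  have "ok n (\<lambda>y B'. ok n ?Q ((\<lambda>(L', S). trial m k L' (Facc @ S)) y) B') (round m L) B"
  proof (rule ok_mono[OF r])
    fix y B' assume h: "(case y of (L', S) \<Rightarrow> \<lambda>B'. B' + length L = B + length L' \<and> L' \<noteq> [] \<and> set L' \<subseteq> set L \<and>
      set S \<subseteq> set L \<and> length S = m \<and> 2 * length L' \<le> length L + 2) B'"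
    obtain L' S where y: "y = (L', S)" by force
    from h y have h1: "B' + length L = B + length L'" "L' \<noteq> []" "set L' \<subseteq> set L"
      "set S \<subseteq> set L" "length S = m" "2 * length L' \<le> length L + 2" by auto
    have pre: "length L' \<le> B'" using h1(1) Suc.prems(3) by linarith
    have IH: "ok n (\<lambda>F B''. B' \<le> B'' + length L' \<and> set F \<subseteq> set (Facc @ S) \<union> set L' \<and>
     2 ^ k * length F + 2 \<le> 2 ^ k * (length (Facc @ S) + k * m) + length L' + 2 ^ (k + 1)) (trial m k L' (Facc @ S)) B'"
      using Suc.IH[OF h1(2) _ pre] h1(3) Suc.prems(2) by blast
    show "ok n ?Q ((\<lambda>(L', S). trial m k L' (Facc @ S)) y) B'"
      unfolding y
    proof (simp only: prod.case, rule ok_mono[OF IH])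
      fix F B'' assume a: "B' \<le> B'' + length L' \<and> set F \<subseteq> set (Facc @ S) \<union> set L' \<and>
        2 ^ k * length F + 2 \<le> 2 ^ k * (length (Facc @ S) + k * m) + length L' + 2 ^ (k + 1)"
      have c1: "B \<le> B'' + length L" using a h1(1) by linarith
      have c2: "set F \<subseteq> set Facc \<union> set L" using a h1(3,4) by auto
      have "2 ^ k * length F + 2 \<le> 2 ^ k * (length Facc + m + k * m) + length L' + 2 * 2 ^ k"
        using a h1(5) by (simp add: algebra_simps)
      from len_helper[OF this h1(6)]
      have c3: "2 ^ Suc k * length F + 2 \<le> 2 ^ Suc k * (length Facc + Suc k * m) + length L + 2 ^ (Suc k + 1)"
        by (simp add: algebra_simps)
      show "?Q F B''" using c1 c2 c3 by blast
    qed
  qed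
  then show ?case by (simp only: trial.simps) (rule ok_bind)
qed

lemma trial_mono: "(F, h') \<in> set_pmf (rexec cmp (trial m k L Facc) h) \<Longrightarrow> set Facc \<subseteq> set F"
proof (induction k arbitrary: L Facc h)
  case 0
  then show ?case by auto
next
  case (Suc k)
  from Suc.prems obtain L' S h1 where "(F, h') \<in> set_pmf (rexec cmp (trial m k L' (Facc @ S)) h1)"
    by (auto simp: rexec_bind split: prod.splits)
  from Suc.IH[OF this] show ?case by auto
qed

lemma trial_prob:
  assumes valid: "valid_comparator x cmp" and mu: "mu \<in> set L" and m: "1 \<le> m"
  shows "measure_pmf.prob (rexec cmp (trial m k L Facc) h) {y. \<forall>f\<in>set (fst y). x f < x mu - 1} \<le> real k / real m"
  using mu
proof (induction k arbitrary: L Facc h)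
  case 0
  have "measure_pmf.prob (rexec cmp (trial m 0 L Facc) h) {y. \<forall>f\<in>set (fst y). x f < x mu - 1} = 0"
    using 0 by (simp add: indicator_def) (rule bexI[of _ mu], auto)
  then show ?case by simp
next
  case (Suc k)
  let ?A = "{y :: (nat list \<times> nat list) \<times> history. mu \<notin> set (fst (fst y)) \<and> (\<forall>s\<in>set (snd (fst y)). x s < x mu - 1)}"
  have "measure_pmf.prob (rexec cmp (trial m (Suc k) L Facc) h) {y. \<forall>f\<in>set (fst y). x f < x mu - 1}
    \<le> measure_pmf.prob (rexec cmp (round m L) h) ?A + real k / real m"
    unfolding trial.simps rexec_bind
  proof (rule prob_bind_le)
    fix y assume y: "y \<in> set_pmf (rexec cmp (round m L) h)" "y \<notin> ?A"
    obtain L' S h1 where yy: "y = ((L', S), h1)" by (cases y) auto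
    show "measure_pmf.prob ((\<lambda>(a, h'). rexec cmp ((\<lambda>(L', S). trial m k L' (Facc @ S)) a) h') y)
        {y. \<forall>f\<in>set (fst y). x f < x mu - 1} \<le> real k / real m"
    proof (cases "mu \<in> set L'")
      case True
      then show ?thesis using Suc.IH[OF True, of "Facc @ S" h1] yy by simp
    next
      case False
      then obtain s where s: "s \<in> set S" "\<not> x s < x mu - 1" using y(2) yy by auto
      have "measure_pmf.prob (rexec cmp (trial m k L' (Facc @ S)) h1) {y. \<forall>f\<in>set (fst y). x f < x mu - 1} = 0"
      proof (subst measure_pmf_zero_iff, rule equalityI, rule subsetI)
        fix z assume z: "z \<in> set_pmf (rexec cmp (trial m k L' (Facc @ S)) h1) \<inter> {y. \<forall>f\<in>set (fst y). x f < x mu - 1}"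
        obtain F h2 where zz: "z = (F, h2)" by (cases z) auto
        have zin: "(F, h2) \<in> set_pmf (rexec cmp (trial m k L' (Facc @ S)) h1)" using z zz by auto
        have "set (Facc @ S) \<subseteq> set F" by (rule trial_mono[OF zin])
        then show "z \<in> {}" using s z zz by auto
      qed simp
      then show ?thesis using yy by simp
    qed
  next
    show "0 \<le> real k / real m" by simp
  qed
  also have "measure_pmf.prob (rexec cmp (round m L) h) ?A \<le> 1 / real m"
    using round_prob[OF valid Suc.prems m] by simp
  finally show ?case by (simp add: add_divide_distrib)
qed

primrec trials :: "nat \<Rightarrow> nat \<Rightarrow> nat \<Rightarrow> nat \<Rightarrow> nat list \<Rightarrow> nat list rt" where
  "trials n K m 0 Facc = Ret Facc"
| "trials n K m (Suc r) Facc = rbind (trial m K [0..<n] Facc) (\<lambda>F. trials n K m r F)"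

lemma ok_trials:
  assumes "0 < n" "n \<le> 2 ^ K" "r * n \<le> B" "set Facc \<subseteq> {..<n}"
  shows "ok n (\<lambda>F B'. B \<le> B' + r * n \<and> set F \<subseteq> {..<n} \<and> length F \<le> length Facc + r * (K * m + 3))
    (trials n K m r Facc) B"
  using assms(3,4)
proof (induction r arbitrary: Facc B)
  case 0
  then show ?case by simp
next
  case (Suc r)
  let ?Q = "\<lambda>F B'. B \<le> B' + Suc r * n \<and> set F \<subseteq> {..<n} \<and> length F \<le> length Facc + Suc r * (K * m + 3)"
  have ne: "[0..<n] \<noteq> []" using assms(1) by simp
  have nB: "length [0..<n] \<le> B" using Suc.prems(1) by simp
  have sub: "set [0..<n] \<subseteq> {..<n}" by auto
  from ok_trial[OF ne sub nB, where Facc=Facc and k=K and m=m]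
  have t: "ok n (\<lambda>F B'. B \<le> B' + n \<and> set F \<subseteq> set Facc \<union> set [0..<n] \<and>
     2 ^ K * length F + 2 \<le> 2 ^ K * (length Facc + K * m) + n + 2 ^ (K + 1)) (trial m K [0..<n] Facc) B"
    by simp
  have "ok n (\<lambda>F B'. ok n ?Q (trials n K m r F) B') (trial m K [0..<n] Facc) B"
  proof (rule ok_mono[OF t])
    fix F B' assume h: "B \<le> B' + n \<and> set F \<subseteq> set Facc \<union> set [0..<n] \<and>
     2 ^ K * length F + 2 \<le> 2 ^ K * (length Facc + K * m) + n + 2 ^ (K + 1)"
    have F: "set F \<subseteq> {..<n}" using h Suc.prems(2) by auto
    have rB: "r * n \<le> B'" using h Suc.prems(1) by simp
    have "2 ^ K * length F \<le> 2 ^ K * (length Facc + K * m) + 2 ^ K + 2 * 2 ^ K"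
      using h assms(2) by simp
    also have "\<dots> = 2 ^ K * (length Facc + K * m + 3)" by (simp add: algebra_simps)
    finally have lF: "length F \<le> length Facc + K * m + 3" by simp
    show "ok n ?Q (trials n K m r F) B'"
      by (rule ok_mono[OF Suc.IH[OF rB F]]) (use h lF in auto)
  qed
  then show ?case by (simp only: trials.simps) (rule ok_bind)
qed

lemma trials_mono: "(F, h') \<in> set_pmf (rexec cmp (trials n K m r Facc) h) \<Longrightarrow> set Facc \<subseteq> set F"
proof (induction r arbitrary: Facc h)
  case 0
  then show ?case by auto
next
  case (Suc r)
  from Suc.prems obtain F1 h1 where a: "(F1, h1) \<in> set_pmf (rexec cmp (trial m K [0..<n] Facc) h)"
    and b: "(F, h') \<in> set_pmf (rexec cmp (trials n K m r F1) h1)"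
    by (auto simp: rexec_bind split: prod.splits)
  from trial_mono[OF a] Suc.IH[OF b] show ?case by auto
qed

lemma trials_prob:
  assumes valid: "valid_comparator x cmp" and mu: "mu < n" and m: "1 \<le> m"
  shows "measure_pmf.prob (rexec cmp (trials n K m r Facc) h) {y. \<forall>f\<in>set (fst y). x f < x mu - 1}
     \<le> (real K / real m) ^ r"
proof (induction r arbitrary: Facc h)
  case 0
  then show ?case by simp
next
  case (Suc r)
  let ?A = "{y :: nat list \<times> history. \<forall>f\<in>set (fst y). x f < x mu - 1}"
  let ?c = "ennreal ((real K / real m) ^ r)"
  have "emeasure (measure_pmf (rexec cmp (trials n K m (Suc r) Facc) h)) ?A
    \<le> (\<integral>\<^sup>+y. ?c * indicator ?A y \<partial>measure_pmf (rexec cmp (trial m K [0..<n] Facc) h))"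
    unfolding trials.simps rexec_bind
  proof (rule emeasure_bind_le)
    fix y assume y: "y \<in> set_pmf (rexec cmp (trial m K [0..<n] Facc) h)"
    obtain F1 h1 where yy: "y = (F1, h1)" by (cases y) auto
    show "emeasure (measure_pmf ((\<lambda>(a, h'). rexec cmp (trials n K m r a) h') y)) ?A \<le> ?c * indicator ?A y"
    proof (cases "y \<in> ?A")
      case True
      have "emeasure (measure_pmf (rexec cmp (trials n K m r F1) h1)) ?A \<le> ?c"
        using Suc.IH[of F1 h1] by (simp add: measure_pmf.emeasure_eq_measure ennreal_leI)
      then show ?thesis using True yy by simp
    next
      case False
      then obtain f where f: "f \<in> set F1" "\<not> x f < x mu - 1" using yy by auto
      have "emeasure (measure_pmf (rexec cmp (trials n K m r F1) h1)) ?A = 0"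
      proof (rule emeasure_zero_support)
        fix z assume z: "z \<in> set_pmf (rexec cmp (trials n K m r F1) h1)"
        obtain F h2 where zz: "z = (F, h2)" by (cases z) auto
        have "set F1 \<subseteq> set F" using trials_mono z zz by metis
        then show "z \<notin> ?A" using f zz by auto
      qed
      then show ?thesis using yy by simp
    qed
  qed
  also have "\<dots> = ?c * emeasure (measure_pmf (rexec cmp (trial m K [0..<n] Facc) h)) ?A"
    by (rule nn_integral_cmult_indicator) simp
  also have "\<dots> \<le> ?c * ennreal (real K / real m)"
  proof (rule mult_left_mono)
    have "mu \<in> set [0..<n]" using mu by simp
    from trial_prob[OF valid this m, of K "Facc" h]
    show "emeasure (measure_pmf (rexec cmp (trial m K [0..<n] Facc) h)) ?A \<le> ennreal (real K / real m)"
      by (simp add: measure_pmf.emeasure_eq_measure ennreal_leI)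
  qed simp
  also have "\<dots> = ennreal ((real K / real m) ^ Suc r)"
    by (simp add: ennreal_mult''[symmetric] mult.commute)
  finally show ?case
    by (simp add: measure_pmf.emeasure_eq_measure ennreal_le_iff)
qed

lemma ln2_ge: "1/2 \<le> ln (2::real)"
proof -
  have e: "exp (1/2::real) * exp (1/2) = exp 1" by (simp add: exp_add[symmetric])
  have "exp (1/2::real) < 2"
  proof (rule ccontr)
    assume "\<not> exp (1/2::real) < 2"
    then have "2 \<le> exp (1/2::real)" by simp
    then have "2 * 2 \<le> exp (1/2::real) * exp (1/2)" by (intro mult_mono) auto
    then show False using e exp_le by simp
  qed
  then have "ln (exp (1/2::real)) < ln 2" by (subst ln_less_cancel_iff) auto
  then show ?thesis by simp
qed

lemma ln_ge4: assumes "85 \<le> (n::real)" shows "4 \<le> ln n"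
proof -
  have "exp (4::real) = exp 1 ^ 4" using exp_of_nat_mult[of 4 "1::real"] by simp
  also have "\<dots> \<le> 3 ^ 4" using exp_le by (intro power_mono) auto
  finally have "exp (4::real) \<le> n" using assms by simp
  then have "ln (exp 4) \<le> ln n" using assms by (subst ln_le_cancel_iff) auto
  then show ?thesis by simp
qed

lemma X_ge:
  fixes c :: nat
  shows "57 * real c \<le> (real c + 1) / ((4^4 / (5 * exp 1)^5) * ln 2)"
proof -
  have e2: "2 \<le> exp (1::real)" using exp_ge_add_one_self[of 1] by simp
  have p: "(10::real) ^ 5 \<le> (5 * exp 1) ^ 5" using e2 by (intro power_mono) auto
  have ln2: "0 < ln (2::real)" "ln (2::real) \<le> 1" using ln_2_less_1 by auto
  have pos5: "0 < (5 * exp 1 :: real) ^ 5" by simp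
  define D where "D = (4^4 / (5 * exp 1)^5) * ln (2::real)"
  have D0: "0 < D" unfolding D_def using ln2 pos5 by simp
  have "D \<le> 4^4 / (5 * exp 1)^5" unfolding D_def using ln2 pos5
    by (simp add: mult_le_cancel_left1 divide_simps)
  also have "\<dots> \<le> 4^4 / 10^5" using p by (intro divide_left_mono) auto
  finally have D1: "D \<le> 4^4 / 10^5" .
  have "57 * real c * D \<le> 57 * real c * (4^4 / 10^5)" using D1 by (intro mult_left_mono) auto
  also have "\<dots> \<le> real c + 1" by simp
  finally have "57 * real c * D \<le> real c + 1" .
  then show ?thesis unfolding D_def[symmetric] using D0 by (simp add: field_simps)
qed

lemma size_bound:
  fixes c n K q N :: nat
  assumes c: "1 \<le> c" and n: "85 \<le> n" and K: "2 ^ (K - 1) < n" "1 \<le> K"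
    and q: "(q - 1) ^ 3 < n" "1 \<le> q" and N: "N \<le> 3 * c * (K * (K * q) + 3)"
  shows "real N \<le> (real c + 1) / ((4^4 / (5 * exp 1)^5) * ln 2) * (real n powr (1/3) * (ln (real n))^2)"
proof -
  define L where "L = ln (real n)"
  define a where "a = real n powr (1/3)"
  have L4: "4 \<le> L" unfolding L_def using ln_ge4[of "real n"] n by simp
  have npos: "0 < real n" using n by simp
  have a3: "a ^ 3 = real n" unfolding a_def using npos
    by (simp add: powr_realpow[symmetric] powr_powr)
  have a1: "1 \<le> a" unfolding a_def using n by (intro ge_one_powr_ge_zero) auto
  have "ln (2 ^ (K - 1)) < L" unfolding L_def using K(1) by (subst ln_less_cancel_iff) (auto simp flip: of_nat_less_iff)
  then have "real (K - 1) * ln 2 < L" by (simp add: ln_realpow)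
  moreover have "real (K - 1) * (1/2) \<le> real (K - 1) * ln 2" using ln2_ge by (intro mult_left_mono) auto
  ultimately have "real (K - 1) < 2 * L" by linarith
  then have Kb: "real K \<le> 3 * L" using K(2) L4 by (simp add: of_nat_diff)
  have qb: "real q \<le> 2 * a"
  proof -
    have "real (q - 1) < a"
    proof (rule ccontr)
      assume "\<not> real (q - 1) < a"
      then have "a ^ 3 \<le> real (q - 1) ^ 3" using a1 by (intro power_mono) auto
      then have "real n \<le> real ((q - 1) ^ 3)" using a3 by simp
      then show False using q(1) by linarith
    qed
    then show ?thesis using q(2) a1 by (simp add: of_nat_diff)
  qed
  have K0: "0 \<le> real K" by simp
  have "real (K * (K * q)) = real K * real K * real q" by simp
  also have "\<dots> \<le> (3 * L) * (3 * L) * (2 * a)"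
    using Kb qb K0 L4 by (intro mult_mono) auto
  finally have kk: "real (K * (K * q)) \<le> 18 * a * L ^ 2" by (simp add: power2_eq_square algebra_simps)
  have "3 \<le> a * L ^ 2"
  proof -
    have "4 * 4 \<le> L * L" using L4 by (intro mult_mono) auto
    then have l16: "16 \<le> L ^ 2" by (simp add: power2_eq_square)
    have "1 * 16 \<le> a * L ^ 2" using a1 l16 by (intro mult_mono) auto
    then show ?thesis by simp
  qed
  then have "real (K * (K * q) + 3) \<le> 19 * a * L ^ 2" using kk by simp
  then have "real N \<le> 3 * real c * (19 * a * L ^ 2)"
  proof -
    have "real N \<le> real (3 * c * (K * (K * q) + 3))" using N by (simp only: of_nat_le_iff)
    also have "\<dots> = 3 * real c * real (K * (K * q) + 3)" by simp
    also have "\<dots> \<le> 3 * real c * (19 * a * L ^ 2)"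
      using \<open>real (K * (K * q) + 3) \<le> 19 * a * L ^ 2\<close> by (intro mult_left_mono) auto
    finally show ?thesis .
  qed
  also have "\<dots> = (57 * real c) * (a * L ^ 2)" by simp
  also have "\<dots> \<le> (real c + 1) / ((4^4 / (5 * exp 1)^5) * ln 2) * (a * L ^ 2)"
    using X_ge[of c] a1 by (intro mult_right_mono) auto
  finally show ?thesis unfolding a_def L_def .
qed

definition Kn :: "nat \<Rightarrow> nat" where "Kn n = (LEAST k. n \<le> 2 ^ k)"
definition qn :: "nat \<Rightarrow> nat" where "qn n = (LEAST q. n \<le> q ^ 3)"
definition mn :: "nat \<Rightarrow> nat" where "mn n = Kn n * qn n"
definition Nmax :: "nat \<Rightarrow> nat \<Rightarrow> nat" where "Nmax c n = min n (3 * c * (Kn n * mn n + 3))"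
definition Bud :: "nat \<Rightarrow> nat \<Rightarrow> nat" where "Bud c n = 3 * c * n + Nmax c n * (Nmax c n - 1) div 2"
definition alg :: "nat \<Rightarrow> nat \<Rightarrow> nat rt" where
  "alg c n = rbind (trials n (Kn n) (mn n) (3 * c) []) (\<lambda>F. RR (remdups F))"

lemma Kn_ge: "n \<le> 2 ^ Kn n"
  unfolding Kn_def by (rule LeastI[of _ n]) (simp add: less_imp_le)

lemma Kn_lt: assumes "2 \<le> n" shows "1 \<le> Kn n" "2 ^ (Kn n - 1) < n"
proof -
  show k1: "1 \<le> Kn n"
  proof (rule ccontr)
    assume "\<not> 1 \<le> Kn n"
    then have "Kn n = 0" by simp
    then show False using Kn_ge[of n] assms by simp
  qed
  have "Kn n - 1 < Kn n" using k1 by simp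
  then have "\<not> n \<le> 2 ^ (Kn n - 1)" unfolding Kn_def by (rule not_less_Least)
  then show "2 ^ (Kn n - 1) < n" by simp
qed

lemma qn_ge: "n \<le> qn n ^ 3"
proof -
  have "n \<le> n ^ 3" by (cases n) (auto simp: power3_eq_cube)
  then show ?thesis unfolding qn_def by (rule LeastI)
qed

lemma qn_lt: assumes "1 \<le> n" shows "1 \<le> qn n" "(qn n - 1) ^ 3 < n"
proof -
  show q1: "1 \<le> qn n"
  proof (rule ccontr)
    assume "\<not> 1 \<le> qn n"
    then have "qn n = 0" by simp
    then show False using qn_ge[of n] assms by simp
  qed
  have "qn n - 1 < qn n" using q1 by simp
  then have "\<not> n \<le> (qn n - 1) ^ 3" unfolding qn_def by (rule not_less_Least)
  then show "(qn n - 1) ^ 3 < n" by simp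
qed

lemma ok_alg:
  assumes "1 \<le> n"
  shows "ok n (\<lambda>k B'. k < n) (alg c n) (Bud c n)"
proof -
  have t: "ok n (\<lambda>F B'. Bud c n \<le> B' + 3 * c * n \<and> set F \<subseteq> {..<n} \<and> length F \<le> length ([]::nat list) + 3 * c * (Kn n * mn n + 3))
    (trials n (Kn n) (mn n) (3 * c) []) (Bud c n)"
  proof -
    have a1: "0 < n" using assms by simp
    have a3: "3 * c * n \<le> Bud c n" by (simp add: Bud_def)
    have a4: "set [] \<subseteq> {..<n}" by simp
    show ?thesis using ok_trials[where n=n and K="Kn n" and r="3*c" and B="Bud c n" and Facc="[]" and m="mn n", OF a1 Kn_ge a3 a4] .
  qed
  have "ok n (\<lambda>F B'. ok n (\<lambda>k B'. k < n) (RR (remdups F)) B') (trials n (Kn n) (mn n) (3 * c) []) (Bud c n)"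
  proof (rule ok_mono[OF t])
    fix F B' assume h: "Bud c n \<le> B' + 3 * c * n \<and> set F \<subseteq> {..<n} \<and> length F \<le> length ([]::nat list) + 3 * c * (Kn n * mn n + 3)"
    let ?l = "length (remdups F)"
    have l1: "?l \<le> n"
    proof -
      have "?l = card (set F)" by (simp add: length_remdups_card_conv)
      also have "\<dots> \<le> card {..<n}" using h by (intro card_mono) auto
      finally show ?thesis by simp
    qed
    have l2: "?l \<le> 3 * c * (Kn n * mn n + 3)" using h by (intro le_trans[OF length_remdups_leq]) simp
    have lN: "?l \<le> Nmax c n" unfolding Nmax_def using l1 l2 by simp
    have "?l * (?l - 1) div 2 \<le> Nmax c n * (Nmax c n - 1) div 2"
      using lN by (intro div_le_mono mult_le_mono diff_le_mono) auto
    also have "\<dots> \<le> B'" using h unfolding Bud_def by simp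
    finally have "?l * (?l - 1) div 2 \<le> B'" .
    then show "ok n (\<lambda>k B'. k < n) (RR (remdups F)) B'"
      using RR_ok[of "remdups F" n B'] h assms by auto
  qed
  then show ?thesis unfolding alg_def by (rule ok_bind)
qed

lemma Bud_real:
  fixes c n :: nat
  assumes c: "1 \<le> c" and n: "1 \<le> n"
  shows "real (Bud c n) \<le> (real (15 * (c + 2) + 1) - 1) * real n
           + 1/2 * ((real c + 1) / ((4^4 / (5 * exp 1)^5) * ln 2))^2
               * real n powr (2/3) * (ln (real n))^4"
proof -
  define N where "N = Nmax c n"
  define X where "X = (real c + 1) / ((4^4 / (5 * exp 1)^5) * ln (2::real))"
  have Xg: "57 * real c \<le> X" unfolding X_def by (rule X_ge)
  have X0: "0 \<le> X" using Xg by (smt (verit) of_nat_0_le_iff)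
  have "2 * (N * (N - 1) div 2) \<le> N * N" by (metis diff_le_self mult_le_mono2 div_times_less_eq_dividend dual_order.trans mult.commute)
  then have "real (2 * (N * (N - 1) div 2)) \<le> real (N * N)" by (simp only: of_nat_le_iff)
  then have d2: "real (N * (N - 1) div 2) \<le> real N * real N / 2" by simp
  have B: "real (Bud c n) \<le> 3 * real c * real n + real N * real N / 2"
    unfolding Bud_def N_def[symmetric] using d2 by simp
  have lin: "3 * real c * real n \<le> (real (15 * (c + 2) + 1) - 1) * real n"
    by (rule mult_right_mono) auto
  have T2: "0 \<le> 1/2 * X^2 * real n powr (2/3) * (ln (real n))^4" by (simp add: zero_le_even_power)
  show ?thesis
  proof (cases "n \<le> 84")
    case True
    have "N \<le> n" unfolding N_def Nmax_def by simp
    then have "real N * real N \<le> real n * real n" by (intro mult_mono) auto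
    also have "\<dots> \<le> 84 * real n" using True by (intro mult_right_mono) auto
    finally have "real N * real N / 2 \<le> 42 * real n" by simp
    moreover have "3 * real c * real n + 42 * real n \<le> (real (15 * (c + 2) + 1) - 1) * real n"
    proof -
      have "3 * real c + 42 \<le> real (15 * (c + 2) + 1) - 1" using c by simp
      then have "(3 * real c + 42) * real n \<le> (real (15 * (c + 2) + 1) - 1) * real n"
        by (rule mult_right_mono) auto
      then show ?thesis by (simp add: algebra_simps)
    qed
    ultimately show ?thesis using B T2 unfolding X_def by linarith
  next
    case False
    then have n85: "85 \<le> n" by simp
    have KL: "2 ^ (Kn n - 1) < n" "1 \<le> Kn n" using Kn_lt[of n] n85 by auto
    have QL: "(qn n - 1) ^ 3 < n" "1 \<le> qn n" using qn_lt[of n] n85 by auto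
    have NN: "N \<le> 3 * c * (Kn n * (Kn n * qn n) + 3)" unfolding N_def Nmax_def mn_def by simp
    have Nb: "real N \<le> X * (real n powr (1/3) * (ln (real n))^2)"
      using size_bound[OF c n85 KL QL NN] unfolding X_def .
    have "real N * real N \<le> (X * (real n powr (1/3) * (ln (real n))^2)) * (X * (real n powr (1/3) * (ln (real n))^2))"
      using Nb by (intro mult_mono) auto
    also have "\<dots> = X^2 * (real n powr (1/3) * real n powr (1/3)) * (ln (real n))^4"
      by (simp add: power2_eq_square power4_eq_xxxx algebra_simps)
    also have "real n powr (1/3) * real n powr (1/3) = real n powr (2/3)"
      by (simp add: powr_add[symmetric])
    finally have "real N * real N / 2 \<le> 1/2 * X^2 * real n powr (2/3) * (ln (real n))^4" by simp
    then show ?thesis using B lin unfolding X_def by linarith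
  qed
qed

lemma alg_prob:
  assumes valid: "valid_comparator x cmp" and c: "1 \<le> c" and n: "2 \<le> n"
  shows "1 - 1 / real n ^ c \<le> measure_pmf.prob (rexec cmp (alg c n) []) {y. is_kmax 3 n x (fst y)}"
proof -
  have fin: "finite (x ` {..<n})" by simp
  have "0 \<in> {..<n}" using n by simp
  then have ne: "x ` {..<n} \<noteq> {}" by blast
  obtain mu where mu: "mu < n" "x mu = Max (x ` {..<n})" using Max_in[OF fin ne] by auto
  have mumax: "\<forall>j<n. x j \<le> x mu" using mu(2) fin by auto
  define K where "K = Kn n"
  define q where "q = qn n"
  have K1: "1 \<le> K" unfolding K_def using Kn_lt[OF n] by simp
  have q1: "1 \<le> q" unfolding q_def using qn_lt[of n] n by simp
  have mdef: "mn n = K * q" unfolding mn_def K_def q_def ..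
  have m1: "1 \<le> mn n" unfolding mdef using K1 q1 by simp
  define G where "G = {y :: nat \<times> history. is_kmax 3 n x (fst y)}"
  define Ab where "Ab = {y :: nat list \<times> history. \<forall>f\<in>set (fst y). x f < x mu - 1}"
  have tb: "measure_pmf.prob (rexec cmp (trials n (Kn n) (mn n) (3 * c) []) []) Ab \<le> (real (Kn n) / real (mn n)) ^ (3 * c)"
    unfolding Ab_def by (rule trials_prob[OF valid mu(1) m1])
  have okt: "ok n (\<lambda>F B'. Bud c n \<le> B' + 3 * c * n \<and> set F \<subseteq> {..<n} \<and> length F \<le> length ([]::nat list) + 3 * c * (Kn n * mn n + 3))
    (trials n (Kn n) (mn n) (3 * c) []) (Bud c n)"
  proof -
    have a1: "0 < n" using n by simp
    have a3: "3 * c * n \<le> Bud c n" by (simp add: Bud_def)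
    have a4: "set [] \<subseteq> {..<n}" by simp
    show ?thesis using ok_trials[where n=n and K="Kn n" and r="3*c" and B="Bud c n" and Facc="[]" and m="mn n", OF a1 Kn_ge a3 a4] .
  qed
  have "measure_pmf.prob (rexec cmp (alg c n) []) (UNIV - G) \<le> measure_pmf.prob (rexec cmp (trials n (Kn n) (mn n) (3 * c) []) []) Ab + 0"
    unfolding alg_def rexec_bind
  proof (rule prob_bind_le)
    fix y assume y: "y \<in> set_pmf (rexec cmp (trials n (Kn n) (mn n) (3 * c) []) [])" "y \<notin> Ab"
    obtain F h1 where yy: "y = (F, h1)" by (cases y) auto
    have Fn: "set F \<subseteq> {..<n}" using set_rexec_ok[OF okt y(1)[unfolded yy]] by auto
    from y(2) yy obtain f where f: "f \<in> set F" "x mu - 1 \<le> x f" unfolding Ab_def by force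
    have "measure_pmf.prob (rexec cmp (RR (remdups F)) h1) (UNIV - G) = 0"
    proof (subst measure_pmf_zero_iff, rule equalityI, rule subsetI)
      fix z assume z: "z \<in> set_pmf (rexec cmp (RR (remdups F)) h1) \<inter> (UNIV - G)"
      obtain w h2 where zz: "z = (w, h2)" by (cases z) auto
      have zin: "(w, h2) \<in> set_pmf (rexec cmp (RR (remdups F)) h1)" using z zz by simp
      have rne: "remdups F \<noteq> []" using f by auto
      from RR_correct[OF valid zin rne] have w: "w \<in> set F" "\<forall>y\<in>set F. x y \<le> x w + 2" by auto
      have wn: "w < n" using w(1) Fn by auto
      have "x f \<le> x w + 2" using w(2) f(1) by simp
      then have "is_kmax 3 n x w" unfolding is_kmax_def k_greater_def using wn mumax f(2) by fastforce
      then show "z \<in> {}" using z zz unfolding G_def by simp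
    qed simp
    then show "measure_pmf.prob ((\<lambda>(a, h'). rexec cmp (RR (remdups a)) h') y) (UNIV - G) \<le> 0"
      using yy by simp
  qed simp
  also have "\<dots> \<le> (real (Kn n) / real (mn n)) ^ (3 * c)" using tb by simp
  also have "(real (Kn n) / real (mn n)) = 1 / real q" unfolding mdef K_def[symmetric] using K1 by simp
  also have "(1 / real q) ^ (3 * c) \<le> 1 / real n ^ c"
  proof -
    have "real n ^ c \<le> (real q ^ 3) ^ c"
      using qn_ge[of n] unfolding q_def[symmetric] by (intro power_mono) (auto simp flip: of_nat_power)
    also have "\<dots> = real q ^ (3 * c)" by (simp add: power_mult)
    finally have "real n ^ c \<le> real q ^ (3 * c)" .
    moreover have "0 < real n ^ c" using n by simp
    ultimately show ?thesis by (simp add: power_one_over divide_simps)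
  qed
  finally have bad: "measure_pmf.prob (rexec cmp (alg c n) []) (UNIV - G) \<le> 1 / real n ^ c" .
  have "measure_pmf.prob (rexec cmp (alg c n) []) (UNIV - G) = 1 - measure_pmf.prob (rexec cmp (alg c n) []) G"
    using measure_pmf.prob_compl[of G "rexec cmp (alg c n) []"] by simp
  then show ?thesis using bad unfolding G_def by linarith
qed

theorem mainTheorem8:
  fixes c :: nat
  assumes "c \<ge> 1"
  shows "\<exists>A :: nat \<Rightarrow> dtree pmf.
    \<forall>n::nat. n \<ge> 1 \<longrightarrow>
      (\<forall>T \<in> set_pmf (A n). wf_tree n T \<and>
         real (height T) \<le>
           (real (15 * (c + 2) + 1) - 1) * real n
           + 1/2 * ((real c + 1) / ((4^4 / (5 * exp 1)^5) * ln 2))^2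
               * real n powr (2/3) * (ln (real n))^4)
    \<and> (\<forall>(x :: nat \<Rightarrow> real) (cmp :: comparator). valid_comparator x cmp \<longrightarrow>
         measure_pmf.prob (A n) {T. is_kmax 3 n x (fst (run cmp [] T))}
           \<ge> 1 - 1 / real n ^ c)"
proof (rule exI[of _ "\<lambda>n. to_pmf (alg c n)"], intro allI impI conjI ballI)
  fix n :: nat assume n: "1 \<le> n"
  {
    fix T assume T: "T \<in> set_pmf (to_pmf (alg c n))"
    from ok_to_pmf[OF ok_alg[OF n] T] have h: "wf_tree n T" "height T \<le> Bud c n" by auto
    show "wf_tree n T" using h by simp
    have "real (height T) \<le> real (Bud c n)" using h by simp
    also have "\<dots> \<le> (real (15 * (c + 2) + 1) - 1) * real n
           + 1/2 * ((real c + 1) / ((4^4 / (5 * exp 1)^5) * ln 2))^2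
               * real n powr (2/3) * (ln (real n))^4"
      by (rule Bud_real[OF assms n])
    finally show "real (height T) \<le> (real (15 * (c + 2) + 1) - 1) * real n
           + 1/2 * ((real c + 1) / ((4^4 / (5 * exp 1)^5) * ln 2))^2
               * real n powr (2/3) * (ln (real n))^4" .
  }
  fix x :: "nat \<Rightarrow> real" and cmp :: comparator
  assume valid: "valid_comparator x cmp"
  have eq: "measure_pmf.prob (to_pmf (alg c n)) {T. is_kmax 3 n x (fst (run cmp [] T))}
      = measure_pmf.prob (rexec cmp (alg c n) []) {y. is_kmax 3 n x (fst y)}"
  proof -
    have "measure_pmf.prob (to_pmf (alg c n)) {T. is_kmax 3 n x (fst (run cmp [] T))}
      = measure_pmf.prob (map_pmf (run cmp []) (to_pmf (alg c n))) {y. is_kmax 3 n x (fst y)}"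
      by (simp add: vimage_def)
    also have "\<dots> = measure_pmf.prob (rexec cmp (alg c n) []) {y. is_kmax 3 n x (fst y)}"
      by (simp only: run_to_pmf)
    finally show ?thesis .
  qed
  show "1 - 1 / real n ^ c \<le> measure_pmf.prob (to_pmf (alg c n)) {T. is_kmax 3 n x (fst (run cmp [] T))}"
  proof (cases "n = 1")
    case True
    then show ?thesis by simp
  next
    case False
    then have "2 \<le> n" using n by simp
    then show ?thesis unfolding eq by (rule alg_prob[OF valid assms])
  qed
qed


end
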